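(* Let $B$ be a commutative ring with identity and $A$ a subring of $B$ containing the identity which is a dense subring of $B$ and a weak completely normal subring of $B$. Then for any two distinct maximal ideals $M, M'$ of $B$, $(M\cap A)+(M'\cap A)=A$.
   Context: $\operatorname{spec} A$ is the set of prime ideals of $A$ with the Zariski topology. A subring $A$ of $B$ is dense in $B$ if for every ideal $I$ of $B$ and every $b\in B\setminus \operatorname{rad}(I)$ there exists $a\in B\setminus\operatorname{rad}(I)$ with $ab\in A$. A subring $A$ of $B$ is a weak completely normal subring of $B$ if for any two distinct maximal ideals $M\neq M'$ of $B$ such that $M\cap A$ and $M'\cap A$ are non-comparable, $\operatorname{cl}_{\operatorname{spec} A}\{M\cap A\}\cap \operatorname{cl}_{\operatorname{spec} A}\{M'\cap A\}=\emptyset$. *)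

theory Defs
  imports "HOL-Algebra.Algebra"
begin

definition rad :: "('a, 'm) ring_scheme \<Rightarrow> 'a set \<Rightarrow> 'a set" where
  "rad R I = {x \<in> carrier R. \<exists>n::nat. x [^]\<^bsub>R\<^esub> n \<in> I}"

definition spec :: "('a, 'm) ring_scheme \<Rightarrow> 'a set set" where
  "spec R = {P. primeideal P R}"

definition zariski_closed :: "('a, 'm) ring_scheme \<Rightarrow> 'a set set \<Rightarrow> bool" where
  "zariski_closed R C \<longleftrightarrow> (\<exists>T. T \<subseteq> carrier R \<and> C = {P \<in> spec R. T \<subseteq> P})"

definition zariski_cl :: "('a, 'm) ring_scheme \<Rightarrow> 'a set set \<Rightarrow> 'a set set" where
  "zariski_cl R Y = {P. \<forall>C. zariski_closed R C \<and> Y \<subseteq> C \<longrightarrow> P \<in> C}"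

definition dense_subring :: "'a set \<Rightarrow> ('a, 'm) ring_scheme \<Rightarrow> bool" where
  "dense_subring A B \<longleftrightarrow>
     (\<forall>I. ideal I B \<longrightarrow> (\<forall>b \<in> carrier B - rad B I.
        \<exists>a \<in> carrier B - rad B I. a \<otimes>\<^bsub>B\<^esub> b \<in> A))"

definition weak_completely_normal_subring :: "'a set \<Rightarrow> ('a, 'm) ring_scheme \<Rightarrow> bool" where
  "weak_completely_normal_subring A B \<longleftrightarrow>
     (\<forall>M M'. maximalideal M B \<and> maximalideal M' B \<and> M \<noteq> M'
        \<and> \<not> (M \<inter> A \<subseteq> M' \<inter> A) \<and> \<not> (M' \<inter> A \<subseteq> M \<inter> A)
        \<longrightarrow> zariski_cl (B\<lparr>carrier := A\<rparr>) {M \<inter> A}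
              \<inter> zariski_cl (B\<lparr>carrier := A\<rparr>) {M' \<inter> A} = {})"

end

theory Submission
  imports Defs "HOL-Algebra.Ring_Divisibility"
begin

lemma exists_prime_above:
  fixes R (structure)
  assumes "cring R" "ideal I R" "\<one>\<^bsub>R\<^esub> \<notin> I"
  shows "\<exists>P. primeideal P R \<and> I \<subseteq> P"
proof -
  interpret cring R by fact
  define S where "S = {J. ideal J R \<and> I \<subseteq> J \<and> \<one> \<notin> J}"
  have "S \<noteq> {}" using assms unfolding S_def by blast
  moreover have "\<Union>C \<in> S" if "C \<noteq> {}" "subset.chain S C" for C
  proof -
    have "subset.chain {J. ideal J R} C" using that(2) unfolding pred_on.chain_def S_def by auto
    from chain_Union_is_ideal[OF this] that(1) have "ideal (\<Union>C) R" by simp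
    moreover have "I \<subseteq> \<Union>C" using that unfolding pred_on.chain_def S_def by blast
    moreover have "\<one> \<notin> \<Union>C" using that unfolding pred_on.chain_def S_def by auto
    ultimately show ?thesis unfolding S_def by auto
  qed
  ultimately obtain M where M: "M \<in> S" "\<And>Y. Y \<in> S \<Longrightarrow> M \<subseteq> Y \<Longrightarrow> Y = M"
    using subset_Zorn_nonempty[of S] by blast
  have "maximalideal M R"
  proof (rule maximalidealI)
    show "ideal M R" using M unfolding S_def by auto
    show "carrier R \<noteq> M" using M unfolding S_def by auto
    fix J assume J: "ideal J R" "M \<subseteq> J" "J \<subseteq> carrier R"
    show "J = M \<or> J = carrier R"
    proof (cases "\<one> \<in> J")
      case True then show ?thesis using ideal.one_imp_carrier[OF J(1)] by blast
    next
      case False then have "J \<in> S" using J M(1) unfolding S_def by auto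
      then show ?thesis using M(2) J(2) by blast
    qed
  qed
  then show ?thesis using maximalideal_prime M(1) unfolding S_def by blast
qed

lemma prime_pow_notin:
  fixes B (structure)
  assumes "primeideal P B" "b \<in> carrier B" "b \<notin> P"
  shows "b [^]\<^bsub>B\<^esub> (n::nat) \<notin> P"
proof (induction n)
  case 0
  interpret primeideal P B by fact
  show ?case using I_notcarr one_imp_carrier by auto
next
  case (Suc n)
  interpret primeideal P B by fact
  show ?case using Suc assms(2,3) I_prime[of "b [^] n" b] by auto
qed

lemma noncomp:
  fixes B (structure)
  assumes "cring B" "subring A B" "dense_subring A B"
    and "maximalideal M B" and "maximalideal M' B" and "M \<noteq> M'"
  shows "\<not> (M \<inter> A \<subseteq> M' \<inter> A)"
proof
  assume sub: "M \<inter> A \<subseteq> M' \<inter> A"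
  interpret cring B by fact
  have pM': "primeideal M' B" using maximalideal_prime assms(5) by blast
  have iM': "ideal M' B" using assms(5) by (rule maximalideal.axioms(1))
  have iM: "ideal M B" using assms(4) by (rule maximalideal.axioms(1))
  have M'c: "M' \<subseteq> carrier B" by (rule subsetI) (rule ideal.Icarr[OF iM'])
  have Mc: "M \<subseteq> carrier B" by (rule subsetI) (rule ideal.Icarr[OF iM])
  have "\<not> M \<subseteq> M'"
  proof
    assume h: "M \<subseteq> M'"
    have "M' = M \<or> M' = carrier B" by (rule maximalideal.I_maximal[OF assms(4) iM' h M'c])
    then show False using assms(6) maximalideal.I_notcarr[OF assms(5)] by auto
  qed
  then obtain b where b: "b \<in> M" "b \<notin> M'" by blast
  have bc: "b \<in> carrier B" using b(1) Mc by blast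
  have "b \<notin> rad B M'" using prime_pow_notin[OF pM' bc b(2)] unfolding rad_def by simp
  then have bb: "b \<in> carrier B - rad B M'" using bc by simp
  have D: "\<forall>b \<in> carrier B - rad B M'. \<exists>a \<in> carrier B - rad B M'. a \<otimes> b \<in> A"
    using assms(3) iM' unfolding dense_subring_def by blast
  obtain a where a: "a \<in> carrier B - rad B M'" "a \<otimes> b \<in> A" using D bb by blast
  have ac: "a \<in> carrier B" using a(1) by simp
  have "a \<notin> M'"
  proof
    assume "a \<in> M'"
    moreover have "a [^] (1::nat) = a" using ac by simp
    ultimately have "a \<in> rad B M'" unfolding rad_def using ac by (intro CollectI conjI exI[of _ "1::nat"]) simp_all
    then show False using a(1) by simp
  qed
  have "a \<otimes> b \<in> M" using ideal.I_l_closed[OF iM b(1) ac] .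
  then have "a \<otimes> b \<in> M'" using sub a(2) by auto
  then show False using primeideal.I_prime[OF pM' ac bc] \<open>a \<notin> M'\<close> b(2) by blast
qed

lemma in_cl:
  assumes "primeideal P R" "p \<subseteq> P"
  shows "P \<in> zariski_cl R {p}"
proof -
  have "P \<in> C" if "zariski_closed R C" "{p} \<subseteq> C" for C
  proof -
    from that(1) obtain T where T: "T \<subseteq> carrier R" "C = {Q \<in> spec R. T \<subseteq> Q}"
      unfolding zariski_closed_def by blast
    have "T \<subseteq> p" using that(2) T(2) by auto
    then have "T \<subseteq> P" using assms(2) by (rule subset_trans)
    moreover have "P \<in> spec R" using assms(1) unfolding spec_def by simp
    ultimately show ?thesis using T(2) by simp
  qed
  then show ?thesis unfolding zariski_cl_def by blast
qed

theorem theorem4p5: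
  fixes B :: "('a, 'm) ring_scheme" and A :: "'a set"
  assumes "cring B"
    and "subring A B"
    and "dense_subring A B"
    and "weak_completely_normal_subring A B"
    and "maximalideal M B" and "maximalideal M' B" and "M \<noteq> M'"
  shows "(M \<inter> A) <+>\<^bsub>B\<^esub> (M' \<inter> A) = A"
proof -
  interpret B: cring B by fact
  define R where "R = B\<lparr>carrier := A\<rparr>"
  have Asub: "A \<subseteq> carrier B" using subringE(1)[OF assms(2)] .
  have cR: "cring R" unfolding R_def using B.subcring_iff[OF Asub] B.subcringI'[OF assms(2)] by blast
  interpret R: cring R by fact
  have cA: "carrier R = A" unfolding R_def by simp
  have hom: "id \<in> ring_hom R B"
  proof (rule ring_hom_memI)
    fix x assume "x \<in> carrier R" then show "id x \<in> carrier B" using Asub cA by auto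
  next
    fix x y assume "x \<in> carrier R" "y \<in> carrier R"
    then show "id (x \<otimes>\<^bsub>R\<^esub> y) = id x \<otimes>\<^bsub>B\<^esub> id y" unfolding R_def by simp
  next
    fix x y assume "x \<in> carrier R" "y \<in> carrier R"
    then show "id (x \<oplus>\<^bsub>R\<^esub> y) = id x \<oplus>\<^bsub>B\<^esub> id y" unfolding R_def by simp
  next
    show "id \<one>\<^bsub>R\<^esub> = \<one>\<^bsub>B\<^esub>" unfolding R_def by simp
  qed
  have rhr: "ring_hom_ring R B id"
    using hom R.ring_axioms B.ring_axioms by (simp add: ring_hom_ringI2)
  have pr: "primeideal (N \<inter> A) R" if "maximalideal N B" for N
  proof -
    have "primeideal {r \<in> carrier R. id r \<in> N} R"
      using ring_hom_ring.primeideal_vimage[OF rhr cR B.maximalideal_prime[OF that]] .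
    moreover have "{r \<in> carrier R. id r \<in> N} = N \<inter> A" using cA by auto
    ultimately show ?thesis by simp
  qed
  have nc1: "\<not> (M \<inter> A \<subseteq> M' \<inter> A)" using noncomp[OF assms(1-3,5,6,7)] .
  have nc2: "\<not> (M' \<inter> A \<subseteq> M \<inter> A)" using noncomp[OF assms(1-3,6,5)] assms(7) by metis
  have W: "\<And>N N'. maximalideal N B \<Longrightarrow> maximalideal N' B \<Longrightarrow> N \<noteq> N'
        \<Longrightarrow> \<not> (N \<inter> A \<subseteq> N' \<inter> A) \<Longrightarrow> \<not> (N' \<inter> A \<subseteq> N \<inter> A)
        \<Longrightarrow> zariski_cl (B\<lparr>carrier := A\<rparr>) {N \<inter> A} \<inter> zariski_cl (B\<lparr>carrier := A\<rparr>) {N' \<inter> A} = {}"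
    using assms(4) unfolding weak_completely_normal_subring_def by blast
  have disj: "zariski_cl R {M \<inter> A} \<inter> zariski_cl R {M' \<inter> A} = {}"
    unfolding R_def by (rule W[OF assms(5,6,7) nc1 nc2])
  have sumeq: "(M \<inter> A) <+>\<^bsub>B\<^esub> (M' \<inter> A) = (M \<inter> A) <+>\<^bsub>R\<^esub> (M' \<inter> A)"
    unfolding set_add_def' R_def by simp
  have id1: "ideal (M \<inter> A) R" using pr[OF assms(5)] primeideal.axioms(1) by blast
  have id2: "ideal (M' \<inter> A) R" using pr[OF assms(6)] primeideal.axioms(1) by blast
  have J: "ideal ((M \<inter> A) <+>\<^bsub>R\<^esub> (M' \<inter> A)) R" using R.add_ideals[OF id1 id2] .
  have s1: "M \<inter> A \<subseteq> (M \<inter> A) <+>\<^bsub>R\<^esub> (M' \<inter> A)"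
  proof
    fix x assume x: "x \<in> M \<inter> A"
    have "x \<oplus>\<^bsub>R\<^esub> \<zero>\<^bsub>R\<^esub> = x" using x cA R.r_zero[of x] by simp
    moreover have "\<zero>\<^bsub>R\<^esub> \<in> M' \<inter> A" using id2 additive_subgroup.zero_closed ideal.axioms(1) by blast
    ultimately have "x \<in> (\<Union>k\<in>M' \<inter> A. {x \<oplus>\<^bsub>R\<^esub> k})" by (intro UN_I[of "\<zero>\<^bsub>R\<^esub>"]) simp_all
    then show "x \<in> (M \<inter> A) <+>\<^bsub>R\<^esub> (M' \<inter> A)" unfolding set_add_def' by (rule UN_I[OF x])
  qed
  have s2: "M' \<inter> A \<subseteq> (M \<inter> A) <+>\<^bsub>R\<^esub> (M' \<inter> A)"
  proof
    fix x assume x: "x \<in> M' \<inter> A"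
    have "\<zero>\<^bsub>R\<^esub> \<oplus>\<^bsub>R\<^esub> x = x" using x cA R.l_zero[of x] by simp
    moreover have z: "\<zero>\<^bsub>R\<^esub> \<in> M \<inter> A" using id1 additive_subgroup.zero_closed ideal.axioms(1) by blast
    ultimately have "x \<in> (\<Union>k\<in>M' \<inter> A. {\<zero>\<^bsub>R\<^esub> \<oplus>\<^bsub>R\<^esub> k})" using x by (intro UN_I[of x]) simp_all
    then show "x \<in> (M \<inter> A) <+>\<^bsub>R\<^esub> (M' \<inter> A)" unfolding set_add_def' by (rule UN_I[OF z])
  qed
  have "\<one>\<^bsub>R\<^esub> \<in> (M \<inter> A) <+>\<^bsub>R\<^esub> (M' \<inter> A)"
  proof (rule ccontr)
    assume "\<one>\<^bsub>R\<^esub> \<notin> (M \<inter> A) <+>\<^bsub>R\<^esub> (M' \<inter> A)"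
    then obtain P where P: "primeideal P R" "(M \<inter> A) <+>\<^bsub>R\<^esub> (M' \<inter> A) \<subseteq> P"
      using exists_prime_above[OF cR J] by blast
    have "P \<in> zariski_cl R {M \<inter> A}" using in_cl[OF P(1)] s1 P(2) by blast
    moreover have "P \<in> zariski_cl R {M' \<inter> A}" using in_cl[OF P(1)] s2 P(2) by blast
    ultimately show False using disj by blast
  qed
  then have "(M \<inter> A) <+>\<^bsub>R\<^esub> (M' \<inter> A) = carrier R" using ideal.one_imp_carrier[OF J] by blast
  then show ?thesis using sumeq cA by simp
qed

end
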